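(* If $w\in\mathbb{R}^n$, $w\ge0$, is strongly bilevel feasible, then $w$ has exactly one bilevel feasible decomposition.
   Context: Multi-commodity network pricing setting: $G=(\mathcal{V},\mathcal{A})$ directed graph with arc costs $c\ge0$, nonempty tolled arc set $\mathcal{A}_1\subsetneq\mathcal{A}$, $n=|\mathcal{A}_1|$, $N$ node–arc incidence matrix; finite set $\mathcal{K}$ of commodities, commodity $k$ having origin $o^k$ and destination $d^k$ connected by a path of arcs not in $\mathcal{A}_1$; $b^k_{o^k}=1$, $b^k_{d^k}=-1$, other entries $0$; $\mathcal{X}^k=\{x\in\mathbb{R}^{\mathcal{A}}: Nx=b^k,\ x\ge0\}$; $x_{\mathcal{A}_1}$ is the restriction of $x$ to $\mathcal{A}_1$. For $t\in\mathbb{R}^n$ let $f^k(t)=\min\{c^\top x+t^\top x_{\mathcal{A}_1}: x\in\mathcal{X}^k\}$ if $t\ge0$, $-\infty$ otherwise; $f=\sum_k f^k$; $g^k(w)=\sup_t\{f^k(t)-t^\top w\}$, $g(w)=\sup_t\{f(t)-t^\top w\}$. A vector $w\ge0$ is strongly bilevel feasible if $\{w\}$ is the projection onto $w$-space of a face of $\operatorname{epi}(g)$ whose affine hull's direction space does not contain $(0,1)$ (equivalently $\{(w,g(w))\}$ is a face of $\operatorname{epi}(g)$). A decomposition of $w$ is a tuple $(w^k)_{k\in\mathcal{K}}$ of vectors $w^k\ge0$ with $\sum_k w^k=w$; it is bilevel feasible if $g(w)=\sum_k g^k(w^k)$. *)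

theory Defs
  imports "HOL-Analysis.Analysis"
begin

text \<open>Tolled arcs A1 = range tol, where
  tol :: 'n \<Rightarrow> 'e is injective, so R^n is real^'n indexed by the tolled arcs.\<close>

definition netflow :: "('e::finite \<Rightarrow> 'v) \<Rightarrow> ('e \<Rightarrow> 'v) \<Rightarrow> ('e \<Rightarrow> real) \<Rightarrow> 'v \<Rightarrow> real" where
  "netflow tail head x v = (\<Sum>a\<in>{a. tail a = v}. x a) - (\<Sum>a\<in>{a. head a = v}. x a)"

definition demand :: "'v \<Rightarrow> 'v \<Rightarrow> 'v \<Rightarrow> real" where
  "demand o' d v = (if v = o' then 1 else if v = d then -1 else 0)"

definition flows :: "('e::finite \<Rightarrow> 'v) \<Rightarrow> ('e \<Rightarrow> 'v) \<Rightarrow> 'v \<Rightarrow> 'v \<Rightarrow> ('e \<Rightarrow> real) set" where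
  "flows tail head o' d = {x. (\<forall>v. netflow tail head x v = demand o' d v) \<and> (\<forall>a. 0 \<le> x a)}"

definition fk :: "('e::finite \<Rightarrow> 'v) \<Rightarrow> ('e \<Rightarrow> 'v) \<Rightarrow> ('e \<Rightarrow> real) \<Rightarrow> ('n::finite \<Rightarrow> 'e)
    \<Rightarrow> 'v \<Rightarrow> 'v \<Rightarrow> real^'n \<Rightarrow> ereal" where
  "fk tail head c tol o' d t =
     (if (\<forall>i. 0 \<le> t $ i)
      then (INF x\<in>flows tail head o' d. ereal ((\<Sum>a\<in>UNIV. c a * x a) + (\<Sum>i\<in>UNIV. t $ i * x (tol i))))
      else -\<infinity>)"

definition gk :: "('e::finite \<Rightarrow> 'v) \<Rightarrow> ('e \<Rightarrow> 'v) \<Rightarrow> ('e \<Rightarrow> real) \<Rightarrow> ('n::finite \<Rightarrow> 'e)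
    \<Rightarrow> 'v \<Rightarrow> 'v \<Rightarrow> real^'n \<Rightarrow> ereal" where
  "gk tail head c tol o' d w = (SUP t. fk tail head c tol o' d t - ereal (t \<bullet> w))"

definition ftot :: "('e::finite \<Rightarrow> 'v) \<Rightarrow> ('e \<Rightarrow> 'v) \<Rightarrow> ('e \<Rightarrow> real) \<Rightarrow> ('n::finite \<Rightarrow> 'e)
    \<Rightarrow> 'k set \<Rightarrow> ('k \<Rightarrow> 'v) \<Rightarrow> ('k \<Rightarrow> 'v) \<Rightarrow> real^'n \<Rightarrow> ereal" where
  "ftot tail head c tol K orig dest t = (\<Sum>k\<in>K. fk tail head c tol (orig k) (dest k) t)"

definition gtot :: "('e::finite \<Rightarrow> 'v) \<Rightarrow> ('e \<Rightarrow> 'v) \<Rightarrow> ('e \<Rightarrow> real) \<Rightarrow> ('n::finite \<Rightarrow> 'e)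
    \<Rightarrow> 'k set \<Rightarrow> ('k \<Rightarrow> 'v) \<Rightarrow> ('k \<Rightarrow> 'v) \<Rightarrow> real^'n \<Rightarrow> ereal" where
  "gtot tail head c tol K orig dest w = (SUP t. ftot tail head c tol K orig dest t - ereal (t \<bullet> w))"

definition epigraph :: "('a \<Rightarrow> ereal) \<Rightarrow> ('a \<times> real) set" where
  "epigraph h = {(w, \<mu>). h w \<le> ereal \<mu>}"

definition aff_direction :: "('a::real_vector) set \<Rightarrow> 'a set" where
  "aff_direction F = {x - y | x y. x \<in> affine hull F \<and> y \<in> affine hull F}"

definition strongly_bilevel_feasible ::
  "('e::finite \<Rightarrow> 'v) \<Rightarrow> ('e \<Rightarrow> 'v) \<Rightarrow> ('e \<Rightarrow> real) \<Rightarrow> ('n::finite \<Rightarrow> 'e)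
    \<Rightarrow> 'k set \<Rightarrow> ('k \<Rightarrow> 'v) \<Rightarrow> ('k \<Rightarrow> 'v) \<Rightarrow> real^'n \<Rightarrow> bool" where
  "strongly_bilevel_feasible tail head c tol K orig dest w \<longleftrightarrow>
     (\<forall>i. 0 \<le> w $ i) \<and>
     (\<exists>F. F face_of epigraph (gtot tail head c tol K orig dest) \<and> fst ` F = {w} \<and>
          (0, 1) \<notin> aff_direction F)"

definition is_decomposition :: "'k set \<Rightarrow> real^'n \<Rightarrow> ('k \<Rightarrow> real^'n) \<Rightarrow> bool" where
  "is_decomposition K w wk \<longleftrightarrow> (\<forall>k\<in>K. \<forall>i. 0 \<le> wk k $ i) \<and> (\<Sum>k\<in>K. wk k) = w"

definition bilevel_feasible_decomposition ::
  "('e::finite \<Rightarrow> 'v) \<Rightarrow> ('e \<Rightarrow> 'v) \<Rightarrow> ('e \<Rightarrow> real) \<Rightarrow> ('n::finite \<Rightarrow> 'e)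
    \<Rightarrow> 'k set \<Rightarrow> ('k \<Rightarrow> 'v) \<Rightarrow> ('k \<Rightarrow> 'v) \<Rightarrow> real^'n \<Rightarrow> ('k \<Rightarrow> real^'n) \<Rightarrow> bool" where
  "bilevel_feasible_decomposition tail head c tol K orig dest w wk \<longleftrightarrow>
     is_decomposition K w wk \<and>
     gtot tail head c tol K orig dest w = (\<Sum>k\<in>K. gk tail head c tol (orig k) (dest k) (wk k))"

definition tollfree_step :: "('e \<Rightarrow> 'v) \<Rightarrow> ('e \<Rightarrow> 'v) \<Rightarrow> ('n \<Rightarrow> 'e) \<Rightarrow> ('v \<times> 'v) set" where
  "tollfree_step tail head tol = {(tail a, head a) | a. a \<notin> range tol}"

end

theory Submission
  imports Defs
begin


lemma netflow_lin:
  fixes tail head :: "'e::finite \<Rightarrow> 'v"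
  shows "netflow tail head (\<lambda>a. p * x a + q * y a) v = p * netflow tail head x v + q * netflow tail head y v"
  unfolding netflow_def by (simp add: sum.distrib sum_distrib_left algebra_simps)

lemma netflow_ind:
  fixes tail head :: "'e::finite \<Rightarrow> 'v"
  shows "netflow tail head (\<lambda>a. if a = b then 1 else 0) v = (if tail b = v then 1 else 0) - (if head b = v then 1 else 0)"
  unfolding netflow_def by (simp add: sum.delta' )

lemma netflow_zero:
  fixes tail head :: "'e::finite \<Rightarrow> 'v"
  shows "netflow tail head (\<lambda>a. 0) v = 0"
  unfolding netflow_def by simp

lemma reach_flow:
  fixes tail head :: "'e::finite \<Rightarrow> 'v"
  assumes "(u, v) \<in> {(tail a, head a) | a. a \<in> A}\<^sup>*"
  shows "\<exists>z. (\<forall>a. 0 \<le> z a) \<and> (\<forall>a. a \<notin> A \<longrightarrow> z a = 0) \<and>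
     (\<forall>w. netflow tail head z w = (if w = u then 1 else 0) - (if w = v then 1 else 0))"
  using assms
proof (induction rule: rtrancl_induct)
  case base
  show ?case by (rule exI[of _ "\<lambda>a. 0"]) (simp add: netflow_zero)
next
  case (step y v)
  then obtain z where z: "\<forall>a. 0 \<le> z a" "\<forall>a. a \<notin> A \<longrightarrow> z a = 0"
     "\<forall>w. netflow tail head z w = (if w = u then 1 else 0) - (if w = y then 1 else 0)" by blast
  from step(2) obtain b where b: "y = tail b" "v = head b" "b \<in> A" by blast
  let ?z = "\<lambda>a. 1 * z a + 1 * (if a = b then 1 else 0)"
  have "netflow tail head ?z w = (if w = u then 1 else 0) - (if w = v then 1 else 0)" for w
    unfolding netflow_lin netflow_ind using z(3) b by auto
  moreover have "\<forall>a. 0 \<le> ?z a" using z by auto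
  moreover have "\<forall>a. a \<notin> A \<longrightarrow> ?z a = 0" using z b by auto
  ultimately show ?case by (intro exI[of _ ?z]) simp
qed



lemma netflow_alt:
  fixes tail head :: "'e::finite \<Rightarrow> 'v"
  shows "netflow tail head y v = (\<Sum>b\<in>UNIV. y b * ((if tail b = v then 1 else 0) - (if head b = v then 1 else 0)))"
proof -
  have "(\<Sum>b\<in>UNIV. y b * ((if tail b = v then 1 else 0) - (if head b = v then 1 else 0)))
     = (\<Sum>b\<in>UNIV. (if tail b = v then y b else 0)) - (\<Sum>b\<in>UNIV. (if head b = v then y b else 0))"
    by (subst sum_subtractf[symmetric]) (rule sum.cong; auto)
  then show ?thesis unfolding netflow_def by (simp add: sum.If_cases)
qed

lemma demand_alt: "o' \<noteq> d \<Longrightarrow> demand o' d v = (if v = o' then 1 else 0) - (if v = d then 1 else 0)"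
  unfolding demand_def by auto

lemma cut_cycle:
  fixes tail head :: "'e::finite \<Rightarrow> 'v::finite"
  assumes y: "y \<in> flows tail head o' d" and od: "o' \<noteq> d" and ya: "y a > 1"
  shows "(head a, tail a) \<in> {(tail b, head b) | b. b \<in> {b. y b > 0}}\<^sup>*"
proof (rule ccontr)
  let ?S = "{(tail b, head b) | b. b \<in> {b. y b > 0}}"
  define R where "R = {v. (head a, v) \<in> ?S\<^sup>*}"
  assume nR: "(head a, tail a) \<notin> ?S\<^sup>*"
  have taR: "tail a \<notin> R" using nR R_def by auto
  have haR: "head a \<in> R" using R_def by auto
  have ynn: "\<forall>b. 0 \<le> y b" using y unfolding flows_def by auto
  have closed: "head b \<in> R" if "tail b \<in> R" "y b > 0" for b
  proof -
    have "(tail b, head b) \<in> ?S" using that by blast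
    then show ?thesis using that(1) unfolding R_def by (auto intro: rtrancl_into_rtrancl)
  qed
  define T where "T b = y b * ((if tail b \<in> R then 1 else 0) - (if head b \<in> R then 1 else 0))" for b
  have sumR: "(\<Sum>v\<in>R. netflow tail head y v) = (\<Sum>b\<in>UNIV. T b)"
  proof -
    have "(\<Sum>v\<in>R. netflow tail head y v) = (\<Sum>v\<in>R. \<Sum>b\<in>UNIV. y b * ((if tail b = v then 1 else 0) - (if head b = v then 1 else 0)))"
      by (simp add: netflow_alt)
    also have "\<dots> = (\<Sum>b\<in>UNIV. \<Sum>v\<in>R. y b * ((if tail b = v then 1 else 0) - (if head b = v then 1 else 0)))"
      by (rule sum.swap)
    also have "\<dots> = (\<Sum>b\<in>UNIV. T b)"
      unfolding T_def by (simp add: sum_distrib_left[symmetric] sum_subtractf)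
    finally show ?thesis .
  qed
  have Tle: "T b \<le> 0" for b
    using closed[of b] ynn[rule_format, of b] unfolding T_def
    by (cases "y b > 0") auto
  have "(\<Sum>b\<in>UNIV. T b) = T a + (\<Sum>b\<in>UNIV - {a}. T b)"
    by (simp add: sum.remove)
  also have "\<dots> \<le> T a" using Tle by (simp add: sum_nonpos)
  also have "T a = - y a" unfolding T_def using taR haR by simp
  finally have "(\<Sum>v\<in>R. netflow tail head y v) < -1" using sumR ya by simp
  moreover have "(\<Sum>v\<in>R. netflow tail head y v) = (\<Sum>v\<in>R. demand o' d v)"
    using y unfolding flows_def by simp
  moreover have "(\<Sum>v\<in>R. demand o' d v) \<ge> -1"
    using od by (simp add: demand_alt sum_subtractf)
  ultimately show False by simp
qed



definition FV :: "('e::finite \<Rightarrow> 'v) \<Rightarrow> ('e \<Rightarrow> 'v) \<Rightarrow> 'v \<Rightarrow> 'v \<Rightarrow> (real^'e) set" where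
  "FV tail head o' d = {v. vec_nth v \<in> flows tail head o' d}"

definition BV :: "('e::finite \<Rightarrow> 'v) \<Rightarrow> ('e \<Rightarrow> 'v) \<Rightarrow> 'v \<Rightarrow> 'v \<Rightarrow> (real^'e) set" where
  "BV tail head o' d = {v \<in> FV tail head o' d. \<forall>a. v $ a \<le> 1}"

lemma closed_FV:
  fixes tail head :: "'e::finite \<Rightarrow> 'v"
  shows "closed (FV tail head o' d)"
proof -
  have "FV tail head o' d = (\<Inter>w. {v::real^'e. netflow tail head (vec_nth v) w = demand o' d w}) \<inter> (\<Inter>a. {v::real^'e. 0 \<le> v $ a})"
    unfolding FV_def flows_def by auto
  moreover have "closed {v::real^'e. netflow tail head (vec_nth v) w = demand o' d w}" for w
    unfolding netflow_def by (intro closed_Collect_eq continuous_intros)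
  moreover have "closed {v::real^'e. 0 \<le> v $ a}" for a
    by (intro closed_Collect_le continuous_intros)
  ultimately show ?thesis by (auto intro!: closed_Int closed_INT)
qed

lemma convex_FV:
  fixes tail head :: "'e::finite \<Rightarrow> 'v"
  shows "convex (FV tail head o' d)"
  unfolding convex_def FV_def flows_def
proof (intro ballI allI impI, goal_cases)
  case (1 x y u v)
  have "netflow tail head (vec_nth (u *\<^sub>R x + v *\<^sub>R y)) w = u * netflow tail head (vec_nth x) w + v * netflow tail head (vec_nth y) w" for w
  proof -
    have e: "vec_nth (u *\<^sub>R x + v *\<^sub>R y) = (\<lambda>a. u * x$a + v * y$a)" by (rule ext) simp
    show ?thesis unfolding e by (rule netflow_lin)
  qed
  then show ?case using 1 by (simp add: distrib_right[symmetric])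
qed

lemma compact_BV:
  fixes tail head :: "'e::finite \<Rightarrow> 'v"
  shows "compact (BV tail head o' d)"
proof -
  have "BV tail head o' d = FV tail head o' d \<inter> cbox 0 1"
    unfolding BV_def FV_def flows_def by (auto simp: mem_box_cart)
  then show ?thesis using closed_FV closed_Int_compact[OF closed_FV compact_cbox] by metis
qed

lemma convex_BV:
  fixes tail head :: "'e::finite \<Rightarrow> 'v"
  shows "convex (BV tail head o' d)"
proof -
  have "BV tail head o' d = FV tail head o' d \<inter> cbox 0 1"
    unfolding BV_def FV_def flows_def by (auto simp: mem_box_cart)
  then show ?thesis using convex_Int[OF convex_FV convex_box(1)] by metis
qed



lemma dominate:
  fixes tail head :: "'e::finite \<Rightarrow> 'v::finite"
  assumes x: "x \<in> flows tail head o' d" and od: "o' \<noteq> d"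
  shows "\<exists>v \<in> BV tail head o' d. \<forall>a. v$a \<le> x a"
proof -
  define D where "D = FV tail head o' d \<inter> {v. \<forall>a. v$a \<le> x a}"
  have D_eq: "D = FV tail head o' d \<inter> cbox 0 (\<chi> a. x a)"
    unfolding D_def FV_def flows_def by (auto simp: mem_box_cart)
  have cD: "compact D" unfolding D_eq by (rule closed_Int_compact[OF closed_FV compact_cbox])
  have vx: "vec_nth (vec_lambda x) = x" by (rule ext) simp
  have xD: "vec_lambda x \<in> D" using x unfolding D_def FV_def by (simp add: vx)
  have "continuous_on D (\<lambda>v::real^'e. \<Sum>a\<in>UNIV. v$a)" by (intro continuous_intros)
  then obtain y where yD: "y \<in> D" and ymin: "\<forall>z\<in>D. (\<Sum>a\<in>UNIV. y$a) \<le> (\<Sum>a\<in>UNIV. z$a)"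
    using continuous_attains_inf[OF cD] xD by blast
  have yf: "vec_nth y \<in> flows tail head o' d" and yx: "\<forall>a. y$a \<le> x a"
    using yD unfolding D_def FV_def by auto
  have ynn: "\<forall>b. 0 \<le> y$b" using yf unfolding flows_def by auto
  have "\<forall>a. y$a \<le> 1"
  proof (rule ccontr)
    assume "\<not> (\<forall>a. y$a \<le> 1)"
    then obtain a where ya: "y$a > 1" by (auto simp: not_le)
    have "(head a, tail a) \<in> {(tail b, head b) | b. b \<in> {b. vec_nth y b > 0}}\<^sup>*"
      using cut_cycle[OF yf od] ya by simp
    from reach_flow[OF this] obtain z where z: "\<forall>b. 0 \<le> z b" "\<forall>b. b \<notin> {b. y$b > 0} \<longrightarrow> z b = 0"
      "\<forall>w. netflow tail head z w = (if w = head a then 1 else 0) - (if w = tail a then 1 else 0)"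
      by blast
    define z' where "z' b = 1 * z b + 1 * (if b = a then 1 else 0)" for b
    have z'nn: "0 \<le> z' b" for b using z(1) unfolding z'_def by simp
    have z'0: "netflow tail head z' w = 0" for w
      unfolding z'_def[abs_def] netflow_lin netflow_ind using z(3) by simp
    have z'a: "z' a \<ge> 1" using z(1) unfolding z'_def by simp
    define P where "P = {b. z' b > 0}"
    have aP: "a \<in> P" using z'a unfolding P_def by simp
    have yP: "y$b > 0" if "b \<in> P" for b
    proof (cases "b = a")
      case True then show ?thesis using ya by simp
    next
      case False
      then have "z b > 0" using that unfolding P_def z'_def by simp
      then show ?thesis using z(2) by force
    qed
    define eps where "eps = Min ((\<lambda>b. y$b / z' b) ` P)"
    have finP: "finite P" by simp
    have eps_pos: "eps > 0" unfolding eps_def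
      using aP yP by (subst Min_gr_iff) (auto simp: P_def)
    have eps_le: "eps * z' b \<le> y$b" for b
    proof (cases "b \<in> P")
      case True
      then have "eps \<le> y$b / z' b" unfolding eps_def by (intro Min_le) auto
      then show ?thesis using True unfolding P_def by (simp add: pos_le_divide_eq)
    next
      case False
      then have "z' b = 0" using z'nn[of b] unfolding P_def by simp
      then show ?thesis using ynn by simp
    qed
    define y' where "y' = (\<chi> b. 1 * y$b + (- eps) * z' b)"
    have y'_nth: "vec_nth y' = (\<lambda>b. 1 * y$b + (- eps) * z' b)" unfolding y'_def by (rule ext) simp
    have nf: "netflow tail head (vec_nth y') w = netflow tail head (vec_nth y) w" for w
      unfolding y'_nth using netflow_lin[of tail head 1 "vec_nth y" "-eps" z' w] z'0[of w] by simp
    have nf2: "\<forall>w. netflow tail head (vec_nth y') w = demand o' d w" using nf yf unfolding flows_def by simp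
    have nn2: "\<forall>b. 0 \<le> vec_nth y' b" using eps_le unfolding y'_nth by (simp add: algebra_simps)
    have "vec_nth y' \<in> flows tail head o' d"
      using nf2 nn2 unfolding flows_def by blast
    moreover have "\<forall>b. y'$b \<le> x b" using yx eps_pos z'nn unfolding y'_def
      by (simp add: order_trans[OF _ yx[rule_format]] mult_nonneg_nonneg)
    ultimately have y'D: "y' \<in> D" unfolding D_def FV_def by simp
    have "(\<Sum>b\<in>UNIV. y'$b) = (\<Sum>b\<in>UNIV. y$b) - eps * (\<Sum>b\<in>UNIV. z' b)"
      unfolding y'_def by (simp add: sum_subtractf sum_distrib_left)
    moreover have "(\<Sum>b\<in>UNIV. z' b) \<ge> z' a"
      by (rule member_le_sum) (auto simp: z'nn)
    ultimately have "(\<Sum>b\<in>UNIV. y'$b) < (\<Sum>b\<in>UNIV. y$b)"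
      using eps_pos z'a by (smt (verit) mult_pos_pos)
    then show False using ymin y'D by force
  qed
  then show ?thesis using yD yx unfolding D_def BV_def by blast
qed



definition cost :: "('e::finite \<Rightarrow> real) \<Rightarrow> ('n::finite \<Rightarrow> 'e) \<Rightarrow> real^'n \<Rightarrow> ('e \<Rightarrow> real) \<Rightarrow> real" where
  "cost c tol t x = (\<Sum>a\<in>UNIV. c a * x a) + (\<Sum>i\<in>UNIV. t $ i * x (tol i))"

context
  fixes tail head :: "'e::finite \<Rightarrow> 'v::finite" and c :: "'e \<Rightarrow> real" and tol :: "'n::finite \<Rightarrow> 'e"
    and o' d :: 'v
  assumes c_nonneg: "\<forall>a. 0 \<le> c a"
    and od: "o' \<noteq> d"
    and path: "(o', d) \<in> (tollfree_step tail head tol)\<^sup>*"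
begin

lemma flows_tollfree: "\<exists>x\<in>flows tail head o' d. \<forall>i. x (tol i) = 0"
proof -
  have "tollfree_step tail head tol = {(tail a, head a) | a. a \<in> - range tol}"
    unfolding tollfree_step_def by auto
  with path have p: "(o', d) \<in> {(tail a, head a) | a. a \<in> - range tol}\<^sup>*" by simp
  obtain z where z: "\<forall>a. 0 \<le> z a" "\<forall>a. a \<notin> - range tol \<longrightarrow> z a = 0"
     "\<forall>w. netflow tail head z w = (if w = o' then 1 else 0) - (if w = d then 1 else 0)"
    using reach_flow[OF p] by blast
  have "z \<in> flows tail head o' d" unfolding flows_def using z(1,3) od by (simp add: demand_alt)
  moreover have "\<forall>i. z (tol i) = 0" using z(2) by auto
  ultimately show ?thesis by blast
qed

lemma cost_mono:
  assumes "\<forall>i. 0 \<le> t $ i" "\<forall>a. x a \<le> y a"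
  shows "cost c tol t x \<le> cost c tol t y"
  unfolding cost_def using assms c_nonneg
  by (intro add_mono sum_mono mult_left_mono) auto

lemma cost_nonneg:
  assumes "\<forall>i. 0 \<le> t $ i" "\<forall>a. 0 \<le> x a"
  shows "0 \<le> cost c tol t x"
  unfolding cost_def using assms c_nonneg
  by (intro add_nonneg_nonneg sum_nonneg mult_nonneg_nonneg) auto

lemma BV_nonempty: "BV tail head o' d \<noteq> {}"
  using flows_tollfree dominate[OF _ od] by blast

lemma fk_attain:
  assumes t: "\<forall>i. 0 \<le> t $ i"
  shows "\<exists>y\<in>BV tail head o' d. fk tail head c tol o' d t = ereal (cost c tol t (vec_nth y))"
proof -
  have "continuous_on (BV tail head o' d) (\<lambda>v::real^'e. cost c tol t (vec_nth v))"
    unfolding cost_def by (intro continuous_intros)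
  then obtain y where yB: "y \<in> BV tail head o' d" and ymin: "\<forall>z\<in>BV tail head o' d. cost c tol t (vec_nth y) \<le> cost c tol t (vec_nth z)"
    using continuous_attains_inf[OF compact_BV BV_nonempty] by blast
  have yf: "vec_nth y \<in> flows tail head o' d" using yB unfolding BV_def FV_def by auto
  have eq: "fk tail head c tol o' d t = (INF x\<in>flows tail head o' d. ereal (cost c tol t x))"
    unfolding fk_def cost_def using t by simp
  have "(INF x\<in>flows tail head o' d. ereal (cost c tol t x)) = ereal (cost c tol t (vec_nth y))"
  proof (rule antisym)
    show "(INF x\<in>flows tail head o' d. ereal (cost c tol t x)) \<le> ereal (cost c tol t (vec_nth y))"
      using yf by (rule INF_lower)
    show "ereal (cost c tol t (vec_nth y)) \<le> (INF x\<in>flows tail head o' d. ereal (cost c tol t x))"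
    proof (rule INF_greatest)
      fix x assume x: "x \<in> flows tail head o' d"
      obtain v where v: "v \<in> BV tail head o' d" "\<forall>a. v$a \<le> x a" using dominate[OF x od] by blast
      have "cost c tol t (vec_nth y) \<le> cost c tol t (vec_nth v)" using ymin v by blast
      also have "\<dots> \<le> cost c tol t x" using cost_mono[OF t] v by simp
      finally show "ereal (cost c tol t (vec_nth y)) \<le> ereal (cost c tol t x)" by simp
    qed
  qed
  then show ?thesis using eq yB by auto
qed

lemma fk_real:
  assumes t: "\<forall>i. 0 \<le> t $ i"
  shows "\<exists>q. fk tail head c tol o' d t = ereal q \<and> 0 \<le> q"
proof -
  obtain y where y: "y\<in>BV tail head o' d" "fk tail head c tol o' d t = ereal (cost c tol t (vec_nth y))"
    using fk_attain[OF t] by blast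
  have "0 \<le> cost c tol t (vec_nth y)" using y(1) t unfolding BV_def FV_def flows_def
    by (intro cost_nonneg) auto
  then show ?thesis using y by auto
qed

lemma fk_neg:
  assumes t: "\<not> (\<forall>i. 0 \<le> t $ i)"
  shows "fk tail head c tol o' d t = -\<infinity>"
  unfolding fk_def by (rule if_not_P[OF t])

lemma fk_eq:
  assumes t: "\<forall>i. 0 \<le> t $ i"
  shows "fk tail head c tol o' d t = (INF x\<in>flows tail head o' d. ereal (cost c tol t x))"
  unfolding fk_def cost_def by (rule if_P[OF t])

lemma fk_cases: "fk tail head c tol o' d t = -\<infinity> \<or> (\<exists>q. fk tail head c tol o' d t = ereal q \<and> 0 \<le> q)"
  using fk_real fk_neg by blast

lemma gk_nonneg: "0 \<le> gk tail head c tol o' d w"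
proof -
  obtain q where "fk tail head c tol o' d 0 = ereal q" "0 \<le> q"
    using fk_real[of 0] by auto
  then have "0 \<le> fk tail head c tol o' d 0 - ereal (0 \<bullet> w)" by simp
  also have "\<dots> \<le> gk tail head c tol o' d w" unfolding gk_def by (rule SUP_upper) simp
  finally show ?thesis .
qed

lemma gk_weak:
  assumes y: "y \<in> flows tail head o' d" and yw: "\<forall>i. y (tol i) \<le> w $ i"
  shows "gk tail head c tol o' d w \<le> ereal (\<Sum>a\<in>UNIV. c a * y a)"
  unfolding gk_def
proof (rule SUP_least)
  fix t :: "real^'n"
  show "fk tail head c tol o' d t - ereal (t \<bullet> w) \<le> ereal (\<Sum>a\<in>UNIV. c a * y a)"
  proof (cases "\<forall>i. 0 \<le> t $ i")
    case True
    obtain q where q: "fk tail head c tol o' d t = ereal q" using fk_real[OF True] by blast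
    have "fk tail head c tol o' d t \<le> ereal (cost c tol t y)"
      unfolding fk_eq[OF True] using y by (rule INF_lower)
    then have 1: "q \<le> cost c tol t y" using q by simp
    have 2: "(\<Sum>i\<in>UNIV. t $ i * y (tol i)) \<le> t \<bullet> w"
      unfolding inner_vec_def using True yw by (auto intro!: sum_mono mult_left_mono)
    have "q - t \<bullet> w \<le> (\<Sum>a\<in>UNIV. c a * y a)" using 1 2 unfolding cost_def by simp
    then show ?thesis using q by simp
  next
    case False then show ?thesis using fk_neg by simp
  qed
qed

lemma gk_mid:
  assumes a: "gk tail head c tol o' d a \<le> ereal r1" and b: "gk tail head c tol o' d b \<le> ereal r2"
  shows "gk tail head c tol o' d ((1/2) *\<^sub>R (a + b)) \<le> ereal ((r1 + r2) / 2)"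
  unfolding gk_def
proof (rule SUP_least)
  fix t :: "real^'n"
  show "fk tail head c tol o' d t - ereal (t \<bullet> ((1/2) *\<^sub>R (a + b))) \<le> ereal ((r1 + r2) / 2)"
  proof (cases "fk tail head c tol o' d t = -\<infinity>")
    case True then show ?thesis by simp
  next
    case False
    then obtain q where q: "fk tail head c tol o' d t = ereal q" using fk_cases by blast
    have "fk tail head c tol o' d t - ereal (t \<bullet> a) \<le> gk tail head c tol o' d a"
      unfolding gk_def by (rule SUP_upper) simp
    then have "ereal (q - t \<bullet> a) \<le> ereal r1" using a q by (metis ereal_minus(1) order_trans)
    then have 1: "q - t \<bullet> a \<le> r1" by simp
    have "fk tail head c tol o' d t - ereal (t \<bullet> b) \<le> gk tail head c tol o' d b"
      unfolding gk_def by (rule SUP_upper) simp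
    then have "ereal (q - t \<bullet> b) \<le> ereal r2" using b q by (metis ereal_minus(1) order_trans)
    then have 2: "q - t \<bullet> b \<le> r2" by simp
    have e: "t \<bullet> ((1/2) *\<^sub>R (a + b)) = (t \<bullet> a + t \<bullet> b) / 2" by (simp add: inner_add_right)
    have "q - t \<bullet> ((1/2) *\<^sub>R (a + b)) \<le> (r1 + r2) / 2" unfolding e using 1 2 by (simp add: field_simps)
    then show ?thesis using q by simp
  qed
qed

end



lemma setsum_compact_convex:
  fixes S :: "'k \<Rightarrow> 'a::euclidean_space set"
  assumes fin: "finite K" and cc: "\<forall>k\<in>K. compact (S k) \<and> convex (S k)"
  shows "compact {\<Sum>k\<in>K. f k | f. \<forall>k\<in>K. f k \<in> S k} \<and> convex {\<Sum>k\<in>K. f k | f. \<forall>k\<in>K. f k \<in> S k}"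
  using fin cc
proof (induction K rule: finite_induct)
  case empty
  have "{\<Sum>k\<in>{}. f k | f. \<forall>k\<in>{}. f k \<in> S k} = {0}" by auto
  then show ?case by simp
next
  case (insert k K)
  let ?P = "{\<Sum>k\<in>K. f k | f. \<forall>k\<in>K. f k \<in> S k}"
  have eq: "{\<Sum>k\<in>insert k K. f k | f. \<forall>k\<in>insert k K. f k \<in> S k} = (\<Union>x\<in>S k. \<Union>y\<in>?P. {x + y})"
  proof (rule set_eqI, rule iffI)
    fix p assume "p \<in> {\<Sum>k\<in>insert k K. f k | f. \<forall>k\<in>insert k K. f k \<in> S k}"
    then obtain f where f: "p = (\<Sum>k\<in>insert k K. f k)" "\<forall>j\<in>insert k K. f j \<in> S j" by blast
    then have "p = f k + (\<Sum>k\<in>K. f k)" using insert.hyps by simp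
    moreover have "(\<Sum>k\<in>K. f k) \<in> ?P" using f(2) by blast
    ultimately show "p \<in> (\<Union>x\<in>S k. \<Union>y\<in>?P. {x + y})" using f(2) by blast
  next
    fix p assume "p \<in> (\<Union>x\<in>S k. \<Union>y\<in>?P. {x + y})"
    then obtain x g where xg: "x \<in> S k" "\<forall>j\<in>K. g j \<in> S j" "p = x + (\<Sum>k\<in>K. g k)" by blast
    define f where "f = g(k := x)"
    have "(\<Sum>j\<in>K. f j) = (\<Sum>j\<in>K. g j)" unfolding f_def using insert.hyps by (intro sum.cong) auto
    then have "p = (\<Sum>j\<in>insert k K. f j)" using xg insert.hyps by (simp add: f_def)
    moreover have "\<forall>j\<in>insert k K. f j \<in> S j" using xg unfolding f_def by auto
    ultimately show "p \<in> {\<Sum>k\<in>insert k K. f k | f. \<forall>k\<in>insert k K. f k \<in> S k}" by blast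
  qed
  have "compact ?P" "convex ?P" using insert by auto
  moreover have "compact (S k)" "convex (S k)" using insert.prems by auto
  ultimately show ?case unfolding eq by (simp add: compact_sums' convex_sums)
qed

lemma sum_minf:
  assumes "finite K" "K \<noteq> {}" "\<forall>k\<in>K. f k = (-\<infinity>::ereal)"
  shows "sum f K = -\<infinity>"
  using assms by (induction K rule: finite_ne_induct) auto

lemma sbf_extreme:
  fixes h :: "'a::real_vector \<Rightarrow> ereal"
  assumes F: "F face_of epigraph h" and fw: "fst ` F = {w}" and dir: "(0, 1) \<notin> aff_direction F"
  shows "\<exists>G. h w = ereal G \<and> F = {(w, G)}"
proof -
  have "w \<in> fst ` F" using fw by simp
  then obtain p0 where p0: "p0 \<in> F" "w = fst p0" by (rule imageE)
  obtain mu where muF: "(w, mu) \<in> F" using p0 by (cases p0) simp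
  have single: "p = (w, mu)" if pF: "p \<in> F" for p
  proof -
    obtain w' mu' where p: "p = (w', mu')" by (cases p)
    have "fst p \<in> fst ` F" using pF by (rule imageI)
    then have "w' = w" using fw p by simp
    show ?thesis
    proof (rule ccontr)
      assume "p \<noteq> (w, mu)"
      then have ne: "mu' \<noteq> mu" using p \<open>w' = w\<close> by simp
      let ?x = "(w, mu')" and ?y = "(w, mu)"
      have xA: "?x \<in> affine hull F" using pF p \<open>w' = w\<close> by (simp add: hull_inc)
      have yA: "?y \<in> affine hull F" using muF by (simp add: hull_inc)
      let ?q = "(1 / (mu' - mu)) *\<^sub>R ?x + (1 - 1 / (mu' - mu)) *\<^sub>R ?y"
      have qA: "?q \<in> affine hull F" by (rule mem_affine[OF affine_affine_hull xA yA]) simp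
      have f1: "(1 / (mu' - mu)) *\<^sub>R w + (1 - 1 / (mu' - mu)) *\<^sub>R w = w"
        by (simp add: scaleR_left_distrib[symmetric])
      have f2: "(1 / (mu' - mu)) * mu' + (1 - 1 / (mu' - mu)) * mu = mu + 1"
      proof -
        define del where "del = mu' - mu"
        have "del \<noteq> 0" "mu' = mu + del" using ne unfolding del_def by auto
        then show ?thesis unfolding del_def[symmetric] by (simp add: field_simps)
      qed
      have "?q = (w, mu + 1)" using f1 f2 by simp
      then have "?q - ?y = (0, 1)" by simp
      then have "(0, 1) \<in> aff_direction F" unfolding aff_direction_def using qA yA by force
      then show False using dir by simp
    qed
  qed
  have Fsub: "F \<subseteq> epigraph h" using F by (simp add: face_of_def)
  then have hle: "h w \<le> ereal mu" using muF unfolding epigraph_def by auto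
  have "h w = ereal mu"
  proof (rule ccontr)
    assume "h w \<noteq> ereal mu"
    then have lt: "h w < ereal mu" using hle by simp
    obtain m0 where m0: "h w \<le> ereal m0" "m0 < mu"
    proof (cases "h w")
      case (real r) then show ?thesis using lt that by auto
    next
      case PInf then show ?thesis using lt by simp
    next
      case MInf then show ?thesis using that[of "mu - 1"] by simp
    qed
    let ?a = "(w, m0)" and ?b = "(w, 2 * mu - m0)"
    have aE: "?a \<in> epigraph h" using m0 unfolding epigraph_def by simp
    have "ereal mu \<le> ereal (2 * mu - m0)" using m0 by simp
    then have "h w \<le> ereal (2 * mu - m0)" using hle by (rule order_trans[rotated])
    then have bE: "?b \<in> epigraph h" unfolding epigraph_def by simp
    have hw: "(1 / 2) *\<^sub>R w + (1 / 2) *\<^sub>R w = w" by (simp add: scaleR_left_distrib[symmetric])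
    have "midpoint ?a ?b = (w, mu)" using hw by (simp add: midpoint_def)
    moreover have "?a \<noteq> ?b" using m0 by simp
    ultimately have "(w, mu) \<in> open_segment ?a ?b" by (metis midpoint_in_open_segment)
    then have "?a \<in> F" using face_ofD[OF F _ aE bE muF] by simp
    then have "?a = (w, mu)" by (rule single)
    then show False using m0 by simp
  qed
  moreover have "F \<subseteq> {(w, mu)}"
  proof
    fix p assume "p \<in> F" then show "p \<in> {(w, mu)}" using single[of p] by simp
  qed
  then have "F = {(w, mu)}" using muF by blast
  ultimately show ?thesis by auto
qed



lemma fk_neg': "\<not> (\<forall>i. 0 \<le> t $ i) \<Longrightarrow> fk tail head c tol o' d t = -\<infinity>"
  unfolding fk_def by (rule if_not_P)

context
  fixes tail head :: "'e::finite \<Rightarrow> 'v::finite" and c :: "'e \<Rightarrow> real" and tol :: "'n::finite \<Rightarrow> 'e"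
    and K :: "'k set" and orig dest :: "'k \<Rightarrow> 'v"
  assumes c_nonneg: "\<forall>a. 0 \<le> c a"
    and K_fin: "finite K"
    and od_distinct: "\<forall>k\<in>K. orig k \<noteq> dest k"
    and tollfree_path: "\<forall>k\<in>K. (orig k, dest k) \<in> (tollfree_step tail head tol)\<^sup>*"
begin

lemma fkK_real:
  assumes "k \<in> K" "\<forall>i. 0 \<le> t $ i"
  shows "\<exists>q. fk tail head c tol (orig k) (dest k) t = ereal q \<and> 0 \<le> q"
  using fk_real[OF c_nonneg _ _ assms(2)] od_distinct tollfree_path assms(1) by blast

lemma gtot_le_sum:
  "gtot tail head c tol K orig dest (\<Sum>k\<in>K. z k) \<le> (\<Sum>k\<in>K. gk tail head c tol (orig k) (dest k) (z k))"
  unfolding gtot_def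
proof (rule SUP_least)
  fix t :: "real^'n"
  show "ftot tail head c tol K orig dest t - ereal (t \<bullet> (\<Sum>k\<in>K. z k)) \<le> (\<Sum>k\<in>K. gk tail head c tol (orig k) (dest k) (z k))"
  proof (cases "\<forall>i. 0 \<le> t $ i")
    case True
    have "\<forall>k\<in>K. \<exists>q. fk tail head c tol (orig k) (dest k) t = ereal q"
      using fkK_real True by blast
    then obtain q where q: "\<forall>k\<in>K. fk tail head c tol (orig k) (dest k) t = ereal (q k)"
      by metis
    have "ftot tail head c tol K orig dest t = (\<Sum>k\<in>K. ereal (q k))"
      unfolding ftot_def using q by (intro sum.cong) auto
    then have ft: "ftot tail head c tol K orig dest t = ereal (\<Sum>k\<in>K. q k)" by (simp add: sum_ereal)
    have "ftot tail head c tol K orig dest t - ereal (t \<bullet> (\<Sum>k\<in>K. z k)) = ereal (\<Sum>k\<in>K. q k - t \<bullet> z k)"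
      unfolding ft by (simp add: inner_sum_right sum_subtractf)
    also have "\<dots> = (\<Sum>k\<in>K. ereal (q k - t \<bullet> z k))" by (simp add: sum_ereal)
    also have "\<dots> \<le> (\<Sum>k\<in>K. gk tail head c tol (orig k) (dest k) (z k))"
    proof (rule sum_mono)
      fix k assume k: "k \<in> K"
      have "ereal (q k - t \<bullet> z k) = fk tail head c tol (orig k) (dest k) t - ereal (t \<bullet> z k)"
        using q k by simp
      also have "\<dots> \<le> gk tail head c tol (orig k) (dest k) (z k)"
        unfolding gk_def by (rule SUP_upper) simp
      finally show "ereal (q k - t \<bullet> z k) \<le> gk tail head c tol (orig k) (dest k) (z k)" .
    qed
    finally show ?thesis .
  next
    case False
    show ?thesis
    proof (cases "K = {}")
      case True then show ?thesis unfolding ftot_def by simp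
    next
      case Kne: False
      have "ftot tail head c tol K orig dest t = -\<infinity>"
        unfolding ftot_def by (rule sum_minf[OF K_fin Kne]) (simp add: fk_neg'[OF False])
      then show ?thesis by simp
    qed
  qed
qed

lemma gtot_nonneg: "0 \<le> gtot tail head c tol K orig dest w"
proof -
  have "0 \<le> ftot tail head c tol K orig dest 0"
    unfolding ftot_def
  proof (rule sum_nonneg)
    fix k assume "k \<in> K"
    then obtain q where "fk tail head c tol (orig k) (dest k) 0 = ereal q" "0 \<le> q"
      using fkK_real[of k 0] by auto
    then show "0 \<le> fk tail head c tol (orig k) (dest k) 0" by simp
  qed
  then have "0 \<le> ftot tail head c tol K orig dest 0 - ereal (0 \<bullet> w)" by simp
  also have "\<dots> \<le> gtot tail head c tol K orig dest w" unfolding gtot_def by (rule SUP_upper) simp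
  finally show ?thesis .
qed

end

lemma lin_nonneg:
  fixes A b c :: real
  assumes "\<forall>l\<ge>0. b < A + l * c"
  shows "0 \<le> c"
proof (rule ccontr)
  assume "\<not> 0 \<le> c"
  then have c: "c < 0" by simp
  define l where "l = (\<bar>A - b\<bar> + 1) / (- c)"
  have l0: "l \<ge> 0" unfolding l_def using c by (intro divide_nonneg_pos) auto
  have "l * c = - (\<bar>A - b\<bar> + 1)" unfolding l_def using c by (simp add: field_simps)
  then have "A + l * c < b" by linarith
  then show False using assms l0 by (meson less_asym)
qed



definition Lm :: "('e::finite \<Rightarrow> real) \<Rightarrow> ('n::finite \<Rightarrow> 'e) \<Rightarrow> real^'e \<Rightarrow> (real^'n) \<times> real" where
  "Lm c tol v = ((\<chi> i. v $ tol i), (\<Sum>a\<in>UNIV. c a * v $ a))"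

lemma linear_Lm: "linear (Lm c tol)"
  by (rule linearI) (simp_all add: Lm_def vec_eq_iff sum.distrib sum_distrib_left algebra_simps)

lemma cost_Lm: "cost c tol t (vec_nth v) = t \<bullet> fst (Lm c tol v) + snd (Lm c tol v)"
  unfolding cost_def Lm_def inner_vec_def by (simp add: add.commute)

context
  fixes tail head :: "'e::finite \<Rightarrow> 'v::finite" and c :: "'e \<Rightarrow> real" and tol :: "'n::finite \<Rightarrow> 'e"
    and K :: "'k set" and orig dest :: "'k \<Rightarrow> 'v" and w :: "real^'n"
  assumes c_nonneg: "\<forall>a. 0 \<le> c a"
    and K_fin: "finite K"
    and od_distinct: "\<forall>k\<in>K. orig k \<noteq> dest k"
    and tollfree_path: "\<forall>k\<in>K. (orig k, dest k) \<in> (tollfree_step tail head tol)\<^sup>*"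
    and w_nonneg: "\<forall>i. 0 \<le> w $ i"
    and K_ne: "K \<noteq> {}"
begin

lemma exists_bfd: "\<exists>wk. bilevel_feasible_decomposition tail head c tol K orig dest w wk"
proof -
  define S where "S k = Lm c tol ` BV tail head (orig k) (dest k)" for k
  define P where "P = {\<Sum>k\<in>K. f k | f. \<forall>k\<in>K. f k \<in> S k}"
  have ccS: "\<forall>k\<in>K. compact (S k) \<and> convex (S k)"
  proof
    fix k
    have "continuous_on (BV tail head (orig k) (dest k)) (Lm c tol)"
      using linear_Lm by (intro linear_continuous_on linear_conv_bounded_linear[THEN iffD1])
    then have "compact (S k)" unfolding S_def by (rule compact_continuous_image[OF _ compact_BV])
    moreover have "convex (S k)" unfolding S_def by (rule convex_linear_image[OF linear_Lm convex_BV])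
    ultimately show "compact (S k) \<and> convex (S k)" ..
  qed
  have cP: "compact P" and vP: "convex P"
    using setsum_compact_convex[OF K_fin ccS] unfolding P_def by auto
  define Wc where "Wc = {p :: (real^'n) \<times> real. \<forall>i. fst p $ i \<le> w $ i}"
  have "closed Wc" unfolding Wc_def by (intro closed_Collect_all closed_Collect_le continuous_intros)
  then have cPw: "compact (P \<inter> Wc)" using cP by (rule compact_Int_closed[rotated])
  have "\<forall>k\<in>K. \<exists>v. v \<in> BV tail head (orig k) (dest k) \<and> (\<forall>i. v $ tol i = 0)"
  proof
    fix k assume k: "k \<in> K"
    obtain x where x: "x \<in> flows tail head (orig k) (dest k)" "\<forall>i. x (tol i) = 0"
      using flows_tollfree[OF c_nonneg od_distinct[rule_format, OF k] tollfree_path[rule_format, OF k]] by blast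
    obtain v where v: "v \<in> BV tail head (orig k) (dest k)" "\<forall>a. v $ a \<le> x a"
      using dominate[OF x(1) od_distinct[rule_format, OF k]] by blast
    have "\<forall>a. 0 \<le> v $ a" using v(1) unfolding BV_def FV_def flows_def by auto
    then have "\<forall>i. v $ tol i = 0" using v(2) x(2) by (metis order_antisym)
    then show "\<exists>v. v \<in> BV tail head (orig k) (dest k) \<and> (\<forall>i. v $ tol i = 0)" using v(1) by blast
  qed
  from bchoice[OF this] obtain y0 where y0: "\<forall>k\<in>K. y0 k \<in> BV tail head (orig k) (dest k) \<and> (\<forall>i. y0 k $ tol i = 0)"
    by blast
  have "(\<Sum>k\<in>K. Lm c tol (y0 k)) \<in> P" unfolding P_def S_def using y0 by blast
  moreover have "(\<Sum>k\<in>K. Lm c tol (y0 k)) \<in> Wc"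
  proof -
    have "fst (Lm c tol (y0 k)) = 0" if "k \<in> K" for k
      using y0 that unfolding Lm_def by (simp add: vec_eq_iff)
    then have "fst (\<Sum>k\<in>K. Lm c tol (y0 k)) = 0" by (simp add: fst_sum)
    then show ?thesis unfolding Wc_def using w_nonneg by simp
  qed
  ultimately have Pwne: "P \<inter> Wc \<noteq> {}" by blast
  have "continuous_on (P \<inter> Wc) snd" by (intro continuous_intros)
  from continuous_attains_inf[OF cPw Pwne this]
  obtain ps where psP: "ps \<in> P \<inter> Wc" and psmin: "\<forall>p\<in>P \<inter> Wc. snd ps \<le> snd p"
    by blast
  \<comment> \<open>strong duality\<close>
  have dual: "ereal (snd ps) \<le> gtot tail head c tol K orig dest w"
  proof (rule ccontr)
    assume "\<not> ereal (snd ps) \<le> gtot tail head c tol K orig dest w"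
    then have lt: "gtot tail head c tol K orig dest w < ereal (snd ps)" by simp
    have g0: "0 \<le> gtot tail head c tol K orig dest w"
      by (rule gtot_nonneg[OF c_nonneg K_fin od_distinct tollfree_path])
    obtain G where G: "gtot tail head c tol K orig dest w = ereal G"
      using lt g0 by (cases "gtot tail head c tol K orig dest w") auto
    have Gps: "G < snd ps" using lt G by simp
    define gam where "gam = (G + snd ps) / 2"
    have gam1: "G < gam" "gam < snd ps" using Gps unfolding gam_def by auto
    define C where "C = {p :: (real^'n) \<times> real. (\<forall>i. 0 \<le> fst p $ i) \<and> 0 \<le> snd p}"
    have clC: "closed C" unfolding C_def
      by (intro closed_Collect_conj closed_Collect_all closed_Collect_le continuous_intros)
    have cvC: "convex C" unfolding C_def convex_def
      by (auto intro!: add_nonneg_nonneg mult_nonneg_nonneg)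
    define SS where "SS = (\<Union>x\<in>C. \<Union>y\<in>P. {x + y})"
    have clSS: "closed SS" unfolding SS_def by (rule closed_compact_sums[OF clC cP])
    have cvSS: "convex SS" unfolding SS_def by (rule convex_sums[OF cvC vP])
    have notin: "(w, gam) \<notin> SS"
    proof
      assume "(w, gam) \<in> SS"
      then obtain x p where xp: "x \<in> C" "p \<in> P" "(w, gam) = x + p" unfolding SS_def by blast
      have "p \<in> Wc" using xp unfolding C_def Wc_def
        by (auto simp: prod_eq_iff)
      then have "snd ps \<le> snd p" using psmin xp(2) by blast
      moreover have "snd p \<le> gam" using xp unfolding C_def by (auto simp: prod_eq_iff)
      ultimately show False using gam1 by simp
    qed
    obtain a b where ab: "a \<bullet> (w, gam) < b" "\<forall>x\<in>SS. b < a \<bullet> x"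
      using separating_hyperplane_closed_point[OF cvSS clSS notin] by blast
    obtain t' tau where a: "a = (t', tau)" by (cases a)
    have key: "b < t' \<bullet> (fst p + s) + tau * (snd p + r)"
      if "p \<in> P" "\<forall>i. 0 \<le> s $ i" "0 \<le> r" for p s r
    proof -
      have "(s, r) \<in> C" using that unfolding C_def by simp
      then have "(s, r) + p \<in> SS" unfolding SS_def using that(1) by blast
      then have "b < a \<bullet> ((s, r) + p)" using ab(2) by blast
      then show ?thesis unfolding a by (cases p) (simp add: inner_Pair add.commute)
    qed
    have psP': "ps \<in> P" and psW: "ps \<in> Wc" using psP by auto
    have t'nn: "0 \<le> t' $ i" for i
    proof (rule lin_nonneg[of b "t' \<bullet> fst ps + tau * snd ps"], intro allI impI)
      fix l :: real assume l: "0 \<le> l"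
      have "b < t' \<bullet> (fst ps + l *\<^sub>R axis i 1) + tau * (snd ps + 0)"
        using key[OF psP', of "l *\<^sub>R axis i 1" 0] l by (simp add: axis_def)
      then show "b < t' \<bullet> fst ps + tau * snd ps + l * t' $ i"
        by (simp add: inner_add_right inner_axis)
    qed
    have taunn: "0 \<le> tau"
    proof (rule lin_nonneg[of b "t' \<bullet> fst ps + tau * snd ps"], intro allI impI)
      fix l :: real assume l: "0 \<le> l"
      have "b < t' \<bullet> (fst ps + 0) + tau * (snd ps + l)"
        using key[OF psP', of 0 l] l by simp
      then show "b < t' \<bullet> fst ps + tau * snd ps + l * tau"
        by (simp add: algebra_simps)
    qed
    have wps: "\<forall>i. 0 \<le> (w - fst ps) $ i" using psW unfolding Wc_def by simp
    have taupos: "0 < tau"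
    proof (rule ccontr)
      assume "\<not> 0 < tau"
      then have tau0: "tau = 0" using taunn by simp
      have "b < t' \<bullet> (fst ps + (w - fst ps)) + tau * (snd ps + 0)"
        using key[OF psP' wps, of 0] by simp
      then have "b < t' \<bullet> w" using tau0 by simp
      moreover have "t' \<bullet> w < b" using ab(1) unfolding a tau0 by (simp add: inner_Pair)
      ultimately show False by simp
    qed
    define t where "t = (1 / tau) *\<^sub>R t'"
    have tnn: "\<forall>i. 0 \<le> t $ i" unfolding t_def using t'nn taupos by simp
    have "\<forall>k\<in>K. \<exists>y. y \<in> BV tail head (orig k) (dest k) \<and>
        fk tail head c tol (orig k) (dest k) t = ereal (cost c tol t (vec_nth y))"
      using fk_attain[OF c_nonneg _ _ tnn] od_distinct tollfree_path by blast
    from bchoice[OF this] obtain yt where yt: "\<forall>k\<in>K. yt k \<in> BV tail head (orig k) (dest k) \<and>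
        fk tail head c tol (orig k) (dest k) t = ereal (cost c tol t (vec_nth (yt k)))" by blast
    define pt where "pt = (\<Sum>k\<in>K. Lm c tol (yt k))"
    have ptP: "pt \<in> P" unfolding pt_def P_def S_def using yt by blast
    have "ftot tail head c tol K orig dest t = (\<Sum>k\<in>K. ereal (cost c tol t (vec_nth (yt k))))"
      unfolding ftot_def using yt by (intro sum.cong) auto
    also have "\<dots> = ereal (t \<bullet> fst pt + snd pt)"
      unfolding pt_def cost_Lm sum_ereal by (simp add: fst_sum snd_sum inner_sum_right sum.distrib)
    finally have ft: "ftot tail head c tol K orig dest t = ereal (t \<bullet> fst pt + snd pt)" .
    have "b < t' \<bullet> (fst pt + 0) + tau * (snd pt + 0)" using key[OF ptP, of 0 0] by simp
    then have b1: "b < tau * (t \<bullet> fst pt + snd pt)"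
      unfolding t_def using taupos by (simp add: algebra_simps)
    have b2: "tau * (t \<bullet> w + gam) < b" using ab(1) taupos unfolding a t_def
      by (simp add: inner_Pair algebra_simps)
    have "t \<bullet> w + gam < t \<bullet> fst pt + snd pt"
      using b1 b2 taupos by (meson less_trans mult_less_cancel_left_pos)
    then have "ereal gam < ftot tail head c tol K orig dest t - ereal (t \<bullet> w)"
      unfolding ft by simp
    also have "\<dots> \<le> gtot tail head c tol K orig dest w" unfolding gtot_def by (rule SUP_upper) simp
    finally show False using G gam1 by simp
  qed
  from psP obtain f where f: "ps = (\<Sum>k\<in>K. f k)" "\<forall>k\<in>K. f k \<in> S k" unfolding P_def by blast
  have "\<forall>k\<in>K. \<exists>y. y \<in> BV tail head (orig k) (dest k) \<and> f k = Lm c tol y"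
    using f(2) unfolding S_def by blast
  from bchoice[OF this] obtain y where y: "\<forall>k\<in>K. y k \<in> BV tail head (orig k) (dest k) \<and> f k = Lm c tol (y k)"
    by blast
  have psy: "ps = (\<Sum>k\<in>K. Lm c tol (y k))" unfolding f(1) using y by (intro sum.cong) auto
  obtain k0 where k0: "k0 \<in> K" using K_ne by blast
  define wk where "wk k = fst (Lm c tol (y k)) + (if k = k0 then w - fst ps else 0)" for k
  have wps: "\<forall>i. fst ps $ i \<le> w $ i" using psP unfolding Wc_def by simp
  have ynn: "\<forall>k\<in>K. \<forall>a. 0 \<le> y k $ a" using y unfolding BV_def FV_def flows_def by auto
  have wk_nn: "\<forall>k\<in>K. \<forall>i. 0 \<le> wk k $ i"
    using ynn wps unfolding wk_def Lm_def by auto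
  have "(\<Sum>k\<in>K. wk k) = (\<Sum>k\<in>K. fst (Lm c tol (y k))) + (\<Sum>k\<in>K. (if k = k0 then w - fst ps else 0))"
    unfolding wk_def by (rule sum.distrib)
  also have "\<dots> = fst ps + (w - fst ps)" using k0 K_fin by (simp add: psy fst_sum)
  finally have wk_sum: "(\<Sum>k\<in>K. wk k) = w" by simp
  have gk_le: "gk tail head c tol (orig k) (dest k) (wk k) \<le> ereal (snd (Lm c tol (y k)))" if k: "k \<in> K" for k
  proof -
    have yf: "vec_nth (y k) \<in> flows tail head (orig k) (dest k)" using y k unfolding BV_def FV_def by auto
    have "\<forall>i. vec_nth (y k) (tol i) \<le> wk k $ i" using wps k unfolding wk_def Lm_def by auto
    from gk_weak[OF c_nonneg od_distinct[rule_format, OF k] tollfree_path[rule_format, OF k] yf this]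
    show ?thesis unfolding Lm_def by simp
  qed
  have "(\<Sum>k\<in>K. gk tail head c tol (orig k) (dest k) (wk k)) \<le> (\<Sum>k\<in>K. ereal (snd (Lm c tol (y k))))"
    using gk_le by (rule sum_mono)
  also have "\<dots> = ereal (snd ps)" by (simp add: psy snd_sum sum_ereal)
  also have "\<dots> \<le> gtot tail head c tol K orig dest w" by (rule dual)
  finally have up: "(\<Sum>k\<in>K. gk tail head c tol (orig k) (dest k) (wk k)) \<le> gtot tail head c tol K orig dest w" .
  have low: "gtot tail head c tol K orig dest w \<le> (\<Sum>k\<in>K. gk tail head c tol (orig k) (dest k) (wk k))"
    using gtot_le_sum[OF c_nonneg K_fin od_distinct tollfree_path, of wk] unfolding wk_sum .
  have eq: "gtot tail head c tol K orig dest w = (\<Sum>k\<in>K. gk tail head c tol (orig k) (dest k) (wk k))"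
    using up low by (rule antisym[rotated])
  show ?thesis unfolding bilevel_feasible_decomposition_def is_decomposition_def
    using wk_nn wk_sum eq by blast
qed

end


lemma sum_upd:
  fixes f :: "'k \<Rightarrow> 'a::ab_group_add"
  assumes "finite K" "k0 \<in> K"
  shows "(\<Sum>k\<in>K. (f(k0 := v)) k) = (\<Sum>k\<in>K. f k) - f k0 + v"
proof -
  have "(\<Sum>k\<in>K. (f(k0 := v)) k) = v + (\<Sum>k\<in>K - {k0}. (f(k0 := v)) k)"
    using sum.remove[OF assms, of "f(k0 := v)"] by simp
  also have "(\<Sum>k\<in>K - {k0}. (f(k0 := v)) k) = (\<Sum>k\<in>K - {k0}. f k)" by (intro sum.cong) auto
  also have "(\<Sum>k\<in>K - {k0}. f k) = (\<Sum>k\<in>K. f k) - f k0"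
    using sum.remove[OF assms, of f] by simp
  finally show ?thesis by (simp add: algebra_simps)
qed

lemma ereal_sum_finite:
  fixes f :: "'k \<Rightarrow> ereal"
  assumes "finite K" "(\<Sum>k\<in>K. f k) = ereal G" "\<forall>k\<in>K. 0 \<le> f k" "k \<in> K"
  shows "f k = ereal (real_of_ereal (f k))"
proof -
  have "f k \<noteq> \<infinity>" using assms sum_Pinfty[of f K] by auto
  moreover have "f k \<noteq> -\<infinity>" using assms by auto
  ultimately show ?thesis by (cases "f k") auto
qed

context
  fixes tail head :: "'e::finite \<Rightarrow> 'v::finite" and c :: "'e \<Rightarrow> real" and tol :: "'n::finite \<Rightarrow> 'e"
    and K :: "'k set" and orig dest :: "'k \<Rightarrow> 'v" and w :: "real^'n" and G :: real
  assumes c_nonneg: "\<forall>a. 0 \<le> c a"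
    and K_fin: "finite K"
    and od_distinct: "\<forall>k\<in>K. orig k \<noteq> dest k"
    and tollfree_path: "\<forall>k\<in>K. (orig k, dest k) \<in> (tollfree_step tail head tol)\<^sup>*"
    and gw: "gtot tail head c tol K orig dest w = ereal G"
    and ext: "\<And>p q. p \<in> epigraph (gtot tail head c tol K orig dest) \<Longrightarrow> q \<in> epigraph (gtot tail head c tol K orig dest)
                \<Longrightarrow> (w, G) \<in> open_segment p q \<Longrightarrow> p = (w, G)"
begin

lemma uniq:
  assumes u: "bilevel_feasible_decomposition tail head c tol K orig dest w u"
    and v: "bilevel_feasible_decomposition tail head c tol K orig dest w v"
  shows "\<forall>k\<in>K. u k = v k"
proof (rule ccontr)
  assume "\<not> (\<forall>k\<in>K. u k = v k)"
  then obtain k0 where k0: "k0 \<in> K" "u k0 \<noteq> v k0" by blast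
  define g where "g k x = gk tail head c tol (orig k) (dest k) x" for k x
  have gnn: "0 \<le> g k x" if "k \<in> K" for k x
    unfolding g_def using gk_nonneg[OF c_nonneg od_distinct[rule_format, OF that] tollfree_path[rule_format, OF that]] .
  have su: "(\<Sum>k\<in>K. u k) = w" and gu: "(\<Sum>k\<in>K. g k (u k)) = ereal G"
    using u gw unfolding bilevel_feasible_decomposition_def is_decomposition_def g_def by auto
  have sv: "(\<Sum>k\<in>K. v k) = w" and gv: "(\<Sum>k\<in>K. g k (v k)) = ereal G"
    using v gw unfolding bilevel_feasible_decomposition_def is_decomposition_def g_def by auto
  define r where "r k = real_of_ereal (g k (u k))" for k
  define r' where "r' k = real_of_ereal (g k (v k))" for k
  have r: "g k (u k) = ereal (r k)" if "k \<in> K" for k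
    unfolding r_def using ereal_sum_finite[OF K_fin gu _ that] gnn by simp
  have r': "g k (v k) = ereal (r' k)" if "k \<in> K" for k
    unfolding r'_def using ereal_sum_finite[OF K_fin gv _ that] gnn by simp
  have "(\<Sum>k\<in>K. g k (u k)) = (\<Sum>k\<in>K. ereal (r k))" using r by (rule sum.cong[OF refl])
  then have sr: "(\<Sum>k\<in>K. r k) = G" using gu by simp
  have "(\<Sum>k\<in>K. g k (v k)) = (\<Sum>k\<in>K. ereal (r' k))" using r' by (rule sum.cong[OF refl])
  then have sr': "(\<Sum>k\<in>K. r' k) = G" using gv by simp
  define m where "m k = (1/2) *\<^sub>R (u k + v k)" for k
  have hw: "(1 / 2) *\<^sub>R (w + w) = w" by (simp add: scaleR_right_distrib scaleR_left_distrib[symmetric])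
  have sm: "(\<Sum>k\<in>K. m k) = w"
    unfolding m_def by (simp add: scaleR_sum_right[symmetric] sum.distrib su sv hw)
  define h where "h k = real_of_ereal (g k (m k))" for k
  have hm: "g k (m k) \<le> ereal ((r k + r' k) / 2)" if k: "k \<in> K" for k
    unfolding m_def g_def
    by (rule gk_mid[OF c_nonneg od_distinct[rule_format, OF k] tollfree_path[rule_format, OF k]])
       (use r[OF k] r'[OF k] in \<open>simp_all add: g_def\<close>)
  have h: "g k (m k) = ereal (h k)" and hle: "h k \<le> (r k + r' k) / 2" if k: "k \<in> K" for k
  proof -
    have "0 \<le> g k (m k)" using gnn k by simp
    then show "g k (m k) = ereal (h k)" using hm[OF k] unfolding h_def by (cases "g k (m k)") auto
    then show "h k \<le> (r k + r' k) / 2" using hm[OF k] by simp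
  qed
  have "ereal G \<le> (\<Sum>k\<in>K. g k (m k))"
    using gtot_le_sum[OF c_nonneg K_fin od_distinct tollfree_path, of m] unfolding sm gw g_def .
  also have "\<dots> = (\<Sum>k\<in>K. ereal (h k))" using h by (rule sum.cong[OF refl])
  finally have Gh: "G \<le> (\<Sum>k\<in>K. h k)" by simp
  have "(\<Sum>k\<in>K. (r k + r' k) / 2) = G" using sr sr' by (simp add: sum.distrib sum_divide_distrib[symmetric])
  then have "(\<Sum>k\<in>K. (r k + r' k) / 2 - h k) = G - (\<Sum>k\<in>K. h k)" by (simp add: sum_subtractf)
  moreover have "(\<Sum>k\<in>K. (r k + r' k) / 2 - h k) \<ge> 0" using hle by (simp add: sum_nonneg)
  ultimately have sh: "(\<Sum>k\<in>K. h k) = G" and s0: "(\<Sum>k\<in>K. (r k + r' k) / 2 - h k) = 0" using Gh by auto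
  have "\<forall>k\<in>K. (r k + r' k) / 2 - h k = 0"
    using s0 sum_nonneg_eq_0_iff[OF K_fin, of "\<lambda>k. (r k + r' k) / 2 - h k"] hle by simp
  then have hk0: "h k0 = (r k0 + r' k0) / 2" using k0 by simp
  define A where "A = (\<Sum>k\<in>K - {k0}. h k)"
  have GA: "G = h k0 + A" unfolding A_def sh[symmetric] using sum.remove[OF K_fin k0(1)] by simp
  define d where "d = v k0 - u k0"
  have dne: "d \<noteq> 0" using k0 unfolding d_def by simp
  have restsum: "(\<Sum>k\<in>K. g k ((m(k0 := x)) k)) = g k0 x + ereal A" for x
  proof -
    have "(\<Sum>k\<in>K. g k ((m(k0 := x)) k)) = g k0 x + (\<Sum>k\<in>K - {k0}. g k ((m(k0 := x)) k))"
      using sum.remove[OF K_fin k0(1), of "\<lambda>k. g k ((m(k0 := x)) k)"] by simp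
    also have "(\<Sum>k\<in>K - {k0}. g k ((m(k0 := x)) k)) = (\<Sum>k\<in>K - {k0}. ereal (h k))"
      using h by (intro sum.cong) auto
    finally show ?thesis unfolding A_def by simp
  qed
  have zsum: "(\<Sum>k\<in>K. (m(k0 := x)) k) = w - m k0 + x" for x
    using sum_upd[OF K_fin k0(1), of m x] sm by simp
  have e1: "w - m k0 + v k0 = w + (1/2) *\<^sub>R d" unfolding m_def d_def
    by (simp add: vec_eq_iff field_simps)
  have e2: "w - m k0 + u k0 = w - (1/2) *\<^sub>R d" unfolding m_def d_def
    by (simp add: vec_eq_iff field_simps)
  define pp where "pp = (w + (1/2) *\<^sub>R d, r' k0 + A)"
  define pm where "pm = (w - (1/2) *\<^sub>R d, r k0 + A)"
  have ppE: "pp \<in> epigraph (gtot tail head c tol K orig dest)"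
  proof -
    have "gtot tail head c tol K orig dest (\<Sum>k\<in>K. (m(k0 := v k0)) k) \<le> (\<Sum>k\<in>K. g k ((m(k0 := v k0)) k))"
      unfolding g_def by (rule gtot_le_sum[OF c_nonneg K_fin od_distinct tollfree_path])
    then show ?thesis unfolding pp_def epigraph_def restsum zsum e1 r'[OF k0(1)] by simp
  qed
  have pmE: "pm \<in> epigraph (gtot tail head c tol K orig dest)"
  proof -
    have "gtot tail head c tol K orig dest (\<Sum>k\<in>K. (m(k0 := u k0)) k) \<le> (\<Sum>k\<in>K. g k ((m(k0 := u k0)) k))"
      unfolding g_def by (rule gtot_le_sum[OF c_nonneg K_fin od_distinct tollfree_path])
    then show ?thesis unfolding pm_def epigraph_def restsum zsum e2 r[OF k0(1)] by simp
  qed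
  have mid: "midpoint pm pp = (w, G)"
  proof -
    have f: "(1/2) *\<^sub>R ((w - (1/2) *\<^sub>R d) + (w + (1/2) *\<^sub>R d)) = w" using hw by simp
    have s: "(1/2) * ((r k0 + A) + (r' k0 + A)) = G" using GA hk0 by simp
    show ?thesis unfolding midpoint_def pm_def pp_def using f s by simp
  qed
  have "pm \<noteq> pp"
  proof
    assume "pm = pp"
    then have "w - (1/2) *\<^sub>R d = w + (1/2) *\<^sub>R d" unfolding pm_def pp_def by simp
    then have "d = 0" by (simp add: vec_eq_iff)
    then show False using dne by simp
  qed
  then have "(w, G) \<in> open_segment pm pp" using mid by (metis midpoint_in_open_segment)
  then have "pm = (w, G)" by (rule ext[OF pmE ppE])
  then have "(1/2) *\<^sub>R d = 0" unfolding pm_def by simp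
  then show False using dne by simp
qed
end



theorem lemma7:
  fixes tail head :: "'e::finite \<Rightarrow> 'v::finite"
    and c :: "'e \<Rightarrow> real"
    and tol :: "'n::finite \<Rightarrow> 'e"
    and K :: "'k set" and orig dest :: "'k \<Rightarrow> 'v"
    and w :: "real^'n"
  assumes c_nonneg: "\<forall>a. 0 \<le> c a"
    and tol_inj: "inj tol"
    and tol_proper: "range tol \<noteq> UNIV"
    and K_fin: "finite K"
    and od_distinct: "\<forall>k\<in>K. orig k \<noteq> dest k"
    and tollfree_path: "\<forall>k\<in>K. (orig k, dest k) \<in> (tollfree_step tail head tol)\<^sup>*"
    and w_nonneg: "\<forall>i. 0 \<le> w $ i"
    and sbf: "strongly_bilevel_feasible tail head c tol K orig dest w"
  shows "\<exists>wk. bilevel_feasible_decomposition tail head c tol K orig dest w wk \<and>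
           (\<forall>wk'. bilevel_feasible_decomposition tail head c tol K orig dest w wk' \<longrightarrow>
                  (\<forall>k\<in>K. wk' k = wk k))"
proof -
  obtain F where F: "F face_of epigraph (gtot tail head c tol K orig dest)" "fst ` F = {w}"
      "(0, 1) \<notin> aff_direction F"
    using sbf unfolding strongly_bilevel_feasible_def by blast
  obtain G where G: "gtot tail head c tol K orig dest w = ereal G" "F = {(w, G)}"
    using sbf_extreme[OF F] by blast
  have ext: "p = (w, G)" if "p \<in> epigraph (gtot tail head c tol K orig dest)"
     "q \<in> epigraph (gtot tail head c tol K orig dest)" "(w, G) \<in> open_segment p q" for p q
    using face_ofD[OF F(1) that(3) that(1) that(2)] G(2) by simp
  show ?thesis
  proof (cases "K = {}")
    case True
    have w0: "w = 0"
    proof (rule ccontr)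
      assume wne: "w \<noteq> 0"
      then have ww: "0 < w \<bullet> w" by simp
      define s where "s = (\<bar>G\<bar> + 1) / (w \<bullet> w)"
      define t where "t = (- s) *\<^sub>R w"
      have "ftot tail head c tol K orig dest t = 0" unfolding ftot_def True by simp
      then have "ftot tail head c tol K orig dest t - ereal (t \<bullet> w) = ereal (s * (w \<bullet> w))"
        unfolding t_def by simp
      also have "s * (w \<bullet> w) = \<bar>G\<bar> + 1" unfolding s_def using ww by simp
      finally have e: "ftot tail head c tol K orig dest t - ereal (t \<bullet> w) = ereal (\<bar>G\<bar> + 1)" .
      have "ftot tail head c tol K orig dest t - ereal (t \<bullet> w) \<le> gtot tail head c tol K orig dest w"
        unfolding gtot_def by (rule SUP_upper) simp
      then have "ereal (\<bar>G\<bar> + 1) \<le> gtot tail head c tol K orig dest w" unfolding e .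
      then show False using G(1) by simp
    qed
    have g0: "gtot tail head c tol K orig dest w = 0"
      unfolding gtot_def ftot_def True w0 by simp
    have "bilevel_feasible_decomposition tail head c tol K orig dest w (\<lambda>k. 0)"
      unfolding bilevel_feasible_decomposition_def is_decomposition_def g0 using True w0 by simp
    then show ?thesis using True by blast
  next
    case False
    obtain wk where wk: "bilevel_feasible_decomposition tail head c tol K orig dest w wk"
      using exists_bfd[OF c_nonneg K_fin od_distinct tollfree_path w_nonneg False] by blast
    have "\<forall>wk'. bilevel_feasible_decomposition tail head c tol K orig dest w wk' \<longrightarrow> (\<forall>k\<in>K. wk' k = wk k)"
    proof (intro allI impI)
      fix wk' assume "bilevel_feasible_decomposition tail head c tol K orig dest w wk'"
      from uniq[OF c_nonneg K_fin od_distinct tollfree_path G(1) ext this wk]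
      show "\<forall>k\<in>K. wk' k = wk k" .
    qed
    then show ?thesis using wk by blast
  qed
qed



end
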